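(* For every $\mathcal{V}$-valued relation $d\colon X\times X\to\mathcal{V}$, $\alpha_X(\gamma_X(d))$ is the least $\mathcal{V}$-category on $X$ above $d$ (in the pointwise order $\sqsubseteq$), i.e. its metric closure.
   Context: $\mathcal{V}$ is a quantale: a complete lattice $(\mathcal{V},\sqsubseteq)$ with a commutative monoid structure $(\mathcal{V},\otimes,k)$ such that $\otimes$ preserves arbitrary joins in each argument; $d_\mathcal{V}(a,-)$ denotes the right adjoint of $a\otimes -$ (residuation). A $\mathcal{V}$-category on $X$ is $d\colon X\times X\to\mathcal{V}$ with $k\sqsubseteq d(x,x)$ and $d(x,y)\otimes d(y,z)\sqsubseteq d(x,z)$. Write $\bigwedge$ for meets in the order $\sqsubseteq$. For $S\subseteq\mathcal{V}^X$, $\alpha_X(S)(x_1,x_2)=\bigwedge_{p\in S} d_\mathcal{V}(p(x_1),p(x_2))$; $\gamma_X(d)=\{p\colon X\to\mathcal{V}\mid d(x_1,x_2)\sqsubseteq d_\mathcal{V}(p(x_1),p(x_2))\text{ for all }x_1,x_2\}$. *)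

theory Defs
  imports Main
begin

definition quantale :: "('v::complete_lattice \<Rightarrow> 'v \<Rightarrow> 'v) \<Rightarrow> 'v \<Rightarrow> bool" where
  "quantale tn k \<longleftrightarrow>
     (\<forall>a b c. tn (tn a b) c = tn a (tn b c)) \<and>
     (\<forall>a b. tn a b = tn b a) \<and>
     (\<forall>a. tn k a = a) \<and>
     (\<forall>a S. tn a (Sup S) = Sup ((\<lambda>b. tn a b) ` S)) \<and>
     (\<forall>a S. tn (Sup S) a = Sup ((\<lambda>b. tn b a) ` S))"

definition resid :: "('v::complete_lattice \<Rightarrow> 'v \<Rightarrow> 'v) \<Rightarrow> 'v \<Rightarrow> 'v \<Rightarrow> 'v" where
  "resid tn a b = Sup {c. tn a c \<le> b}"

definition vcat :: "('v::complete_lattice \<Rightarrow> 'v \<Rightarrow> 'v) \<Rightarrow> 'v \<Rightarrow> ('x \<Rightarrow> 'x \<Rightarrow> 'v) \<Rightarrow> bool" where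
  "vcat tn k d \<longleftrightarrow> (\<forall>x. k \<le> d x x) \<and> (\<forall>x y z. tn (d x y) (d y z) \<le> d x z)"

definition alphaX :: "('v::complete_lattice \<Rightarrow> 'v \<Rightarrow> 'v) \<Rightarrow> ('x \<Rightarrow> 'v) set \<Rightarrow> 'x \<Rightarrow> 'x \<Rightarrow> 'v" where
  "alphaX tn S x1 x2 = (INF p\<in>S. resid tn (p x1) (p x2))"

definition gammaX :: "('v::complete_lattice \<Rightarrow> 'v \<Rightarrow> 'v) \<Rightarrow> ('x \<Rightarrow> 'x \<Rightarrow> 'v) \<Rightarrow> ('x \<Rightarrow> 'v) set" where
  "gammaX tn d = {p. \<forall>x1 x2. d x1 x2 \<le> resid tn (p x1) (p x2)}"

end

theory Submission
  imports Defs
begin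

lemma q_mono:
  assumes q: "quantale tn k" and "a \<le> b"
  shows "tn c a \<le> tn c b"
proof -
  have "tn c (Sup {a, b}) = Sup ((\<lambda>x. tn c x) ` {a, b})"
    using q unfolding quantale_def by blast
  moreover have "Sup {a, b} = b" using assms(2) by (simp add: sup_absorb2)
  ultimately have "tn c b = sup (tn c a) (tn c b)" by simp
  thus ?thesis by (metis sup.cobounded1)
qed

lemma q_mono2:
  assumes q: "quantale tn k" and "a \<le> b"
  shows "tn a c \<le> tn b c"
proof -
  have "tn a c = tn c a" "tn b c = tn c b" using q unfolding quantale_def by auto
  thus ?thesis using q_mono[OF assms] by simp
qed

lemma resid_counit:
  assumes q: "quantale tn k"
  shows "tn a (resid tn a b) \<le> b"
proof -
  have "tn a (resid tn a b) = Sup ((\<lambda>c. tn a c) ` {c. tn a c \<le> b})"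
    using q unfolding quantale_def resid_def by blast
  also have "\<dots> \<le> b" by (auto intro: Sup_least)
  finally show ?thesis .
qed

lemma resid_iff:
  assumes q: "quantale tn k"
  shows "c \<le> resid tn a b \<longleftrightarrow> tn a c \<le> b"
proof
  assume "c \<le> resid tn a b"
  hence "tn a c \<le> tn a (resid tn a b)" by (rule q_mono[OF q])
  thus "tn a c \<le> b" using resid_counit[OF q] order_trans by blast
next
  assume "tn a c \<le> b"
  thus "c \<le> resid tn a b" unfolding resid_def by (auto intro: Sup_upper)
qed

theorem mainTheorem8:
  fixes tn :: "'v::complete_lattice \<Rightarrow> 'v \<Rightarrow> 'v" and k :: 'v
    and d :: "'x \<Rightarrow> 'x \<Rightarrow> 'v"
  assumes "quantale tn k"
  shows "vcat tn k (alphaX tn (gammaX tn d))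
       \<and> (\<forall>x y. d x y \<le> alphaX tn (gammaX tn d) x y)
       \<and> (\<forall>e. vcat tn k e \<and> (\<forall>x y. d x y \<le> e x y)
              \<longrightarrow> (\<forall>x y. alphaX tn (gammaX tn d) x y \<le> e x y))"
proof -
  note q = assms
  have assoc: "\<And>a b c. tn (tn a b) c = tn a (tn b c)"
    and comm: "\<And>a b. tn a b = tn b a" and unit: "\<And>a. tn k a = a"
    using q unfolding quantale_def by auto
  define al where "al = alphaX tn (gammaX tn d)"
  have alle: "al x y \<le> resid tn (p x) (p y)" if "p \<in> gammaX tn d" for p x y
    unfolding al_def alphaX_def using that by (auto intro: INF_lower)
  have A: "vcat tn k al"
    unfolding vcat_def
  proof (intro conjI allI)
    fix x
    show "k \<le> al x x" unfolding al_def alphaX_def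
      by (rule INF_greatest) (simp add: resid_iff[OF q] comm unit)
  next
    fix x y z
    have "tn (al x y) (al y z) \<le> resid tn (p x) (p z)" if p: "p \<in> gammaX tn d" for p
    proof -
      have 1: "tn (p x) (al x y) \<le> p y" using alle[OF p] resid_iff[OF q] by blast
      have 2: "tn (p y) (al y z) \<le> p z" using alle[OF p] resid_iff[OF q] by blast
      have "tn (p x) (tn (al x y) (al y z)) = tn (tn (p x) (al x y)) (al y z)"
        by (simp add: assoc)
      also have "\<dots> \<le> tn (p y) (al y z)" using q_mono2[OF q 1] .
      also have "\<dots> \<le> p z" by (rule 2)
      finally show "tn (al x y) (al y z) \<le> resid tn (p x) (p z)"
        using resid_iff[OF q] by blast
    qed
    thus "tn (al x y) (al y z) \<le> al x z" unfolding al_def alphaX_def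
      by (rule INF_greatest)
  qed
  have B: "\<forall>x y. d x y \<le> al x y"
  proof (intro allI)
    fix x y
    show "d x y \<le> al x y" unfolding al_def alphaX_def
      by (rule INF_greatest) (simp add: gammaX_def)
  qed
  have C: "\<forall>x y. al x y \<le> e x y" if e: "vcat tn k e" "\<forall>x y. d x y \<le> e x y" for e
  proof (intro allI)
    fix x y
    have g: "e x \<in> gammaX tn d" unfolding gammaX_def
    proof (intro CollectI allI)
      fix y1 y2
      have "tn (e x y1) (d y1 y2) \<le> tn (e x y1) (e y1 y2)" using e(2) q_mono[OF q] by blast
      also have "\<dots> \<le> e x y2" using e(1) unfolding vcat_def by blast
      finally show "d y1 y2 \<le> resid tn (e x y1) (e x y2)" using resid_iff[OF q] by blast
    qed
    have "al x y = tn k (al x y)" by (simp add: unit)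
    also have "\<dots> \<le> tn (e x x) (al x y)" using e(1) unfolding vcat_def
      using q_mono2[OF q] by blast
    also have "\<dots> \<le> e x y" using alle[OF g, of x y] resid_iff[OF q] by blast
    finally show "al x y \<le> e x y" .
  qed
  show ?thesis using A B C unfolding al_def by blast
qed

end
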